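(* Let $d\ge 1$ and let $X_1, X_2 \subset \mathbb{R}^d$ be finite nonempty sets of signals. For $\mathbf{x}=(x_1,\dots,x_d)$ and $0\le s\le d-1$ let $\mathbf{x}^s=(x_{s+1},x_{s+2},\dots,x_d,x_1,\dots,x_s)$ be its circular shift by $s$, and let $S_i=\{\mathbf{x}^s : \mathbf{x}\in X_i,\ 0\le s\le d-1\}$ for $i=1,2$. Let $f_{dc}(\mathbf{x})=\frac{1}{\sqrt d}\sum_{i=1}^d x_i$ and $\bar{\mathbf{w}}=\frac{1}{\sqrt d}\mathbf{1}_d$. Then $S_1$ and $S_2$ are linearly separable if and only if $\max_{\mathbf{x}_1\in S_1} f_{dc}(\mathbf{x}_1) < \min_{\mathbf{x}_2\in S_2} f_{dc}(\mathbf{x}_2)$ or $\max_{\mathbf{x}_2\in S_2} f_{dc}(\mathbf{x}_2) < \min_{\mathbf{x}_1\in S_1} f_{dc}(\mathbf{x}_1)$. Furthermore, if they are linearly separable and the first inequality holds, then the maximum margin equals $\min_{\mathbf{x}_2\in S_2} f_{dc}(\mathbf{x}_2)-\max_{\mathbf{x}_1\in S_1} f_{dc}(\mathbf{x}_1)$ (and symmetrically, with the roles of $S_1,S_2$ exchanged, if the second inequality holds), and this maximum margin is attained by a separating hyperplane with normal vector $\bar{\mathbf{w}}$.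
   Context: Two finite sets $A,B\subset\mathbb{R}^d$ are linearly separable if there exist a unit vector $\mathbf{w}\in\mathbb{R}^d$ and a threshold $T\in\mathbb{R}$ such that $\mathbf{w}^T\mathbf{a}<T<\mathbf{w}^T\mathbf{b}$ for all $\mathbf{a}\in A,\mathbf{b}\in B$, or the same with $A$ and $B$ exchanged. For a unit vector $\mathbf{w}$ with $A$ on the low side, the margin of $\mathbf{w}$ is $\min_{\mathbf{b}\in B}\mathbf{w}^T\mathbf{b}-\max_{\mathbf{a}\in A}\mathbf{w}^T\mathbf{a}$; the maximum margin is the supremum of this quantity over unit vectors $\mathbf{w}$. $\mathbf{1}_d$ denotes the all-ones vector in $\mathbb{R}^d$. *)

theory Defs
  imports "HOL-Analysis.Analysis"
begin

text \<open>Vectors of R^d are represented as functions nat => real that vanish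
  outside the index range {0..<d} (0-based indices).\<close>

definition vecs :: "nat \<Rightarrow> (nat \<Rightarrow> real) set" where
  "vecs d = {x. \<forall>i\<ge>d. x i = 0}"

definition ip :: "nat \<Rightarrow> (nat \<Rightarrow> real) \<Rightarrow> (nat \<Rightarrow> real) \<Rightarrow> real" where
  "ip d w x = (\<Sum>i<d. w i * x i)"

definition unit_vec :: "nat \<Rightarrow> (nat \<Rightarrow> real) \<Rightarrow> bool" where
  "unit_vec d w \<longleftrightarrow> w \<in> vecs d \<and> sqrt (ip d w w) = 1"

text \<open>Circular shift by s: (x^s)_i = x_{(i+s) mod d} (0-based), i.e.
  x^s = (x_{s+1},...,x_d,x_1,...,x_s) in 1-based notation.\<close>
definition cshift :: "nat \<Rightarrow> nat \<Rightarrow> (nat \<Rightarrow> real) \<Rightarrow> (nat \<Rightarrow> real)" where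
  "cshift d s x = (\<lambda>i. if i < d then x ((i + s) mod d) else 0)"

definition shifts :: "nat \<Rightarrow> (nat \<Rightarrow> real) set \<Rightarrow> (nat \<Rightarrow> real) set" where
  "shifts d X = {cshift d s x | x s. x \<in> X \<and> s < d}"

definition f_dc :: "nat \<Rightarrow> (nat \<Rightarrow> real) \<Rightarrow> real" where
  "f_dc d x = (\<Sum>i<d. x i) / sqrt (real d)"

definition wbar :: "nat \<Rightarrow> (nat \<Rightarrow> real)" where
  "wbar d = (\<lambda>i. if i < d then 1 / sqrt (real d) else 0)"

definition lin_sep :: "nat \<Rightarrow> (nat \<Rightarrow> real) set \<Rightarrow> (nat \<Rightarrow> real) set \<Rightarrow> bool" where
  "lin_sep d A B \<longleftrightarrow> (\<exists>w T. unit_vec d w \<and>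
     ((\<forall>a\<in>A. \<forall>b\<in>B. ip d w a < T \<and> T < ip d w b) \<or>
      (\<forall>a\<in>A. \<forall>b\<in>B. ip d w b < T \<and> T < ip d w a)))"

definition margin :: "nat \<Rightarrow> (nat \<Rightarrow> real) set \<Rightarrow> (nat \<Rightarrow> real) set \<Rightarrow> (nat \<Rightarrow> real) \<Rightarrow> real" where
  "margin d A B w = Min (ip d w ` B) - Max (ip d w ` A)"

definition max_margin :: "nat \<Rightarrow> (nat \<Rightarrow> real) set \<Rightarrow> (nat \<Rightarrow> real) set \<Rightarrow> real" where
  "max_margin d A B = (SUP w\<in>{w. unit_vec d w}. margin d A B w)"

end

theory Submission
  imports Defs
begin

lemma modinj1: assumes "a < (d::nat)" "b < d" "(a + i) mod d = (b + i) mod d" "a \<le> b" shows "a = b"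
proof -
  have "d dvd (b + i) - (a + i)" using assms(3,4) mod_eq_dvd_iff_nat[of "a+i" "b+i" d] by simp
  then have "d dvd b - a" by simp
  moreover have "b - a < d" using assms by linarith
  ultimately have "b - a = 0" using nat_dvd_not_less by (cases "b - a = 0") auto
  then show "a = b" using assms(4) by simp
qed
lemma modinj: assumes "a < (d::nat)" "b < d" "(a + i) mod d = (b + i) mod d" shows "a = b"
proof (cases "a \<le> b")
  case True then show ?thesis using modinj1 assms by blast
next
  case False then show ?thesis using modinj1[of b d a i] assms by simp
qed

lemma rot_sum:
  assumes "0 < d"
  shows "(\<Sum>s<d. x ((s + i) mod d)) = (\<Sum>s<(d::nat). (x s::real))"
proof -
  let ?g = "\<lambda>s. (s + i) mod d"
  have inj: "inj_on ?g {..<d}"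
  proof (rule inj_onI)
    fix a b assume "a \<in> {..<d}" "b \<in> {..<d}" "?g a = ?g b"
    then show "a = b"
      using modinj by simp
  qed
  have sub: "?g ` {..<d} \<subseteq> {..<d}" using assms by auto
  have eq: "?g ` {..<d} = {..<d}"
    using card_subset_eq[OF _ sub] card_image[OF inj] by auto
  have "(\<Sum>s<d. x ((s + i) mod d)) = sum x (?g ` {..<d})"
    using sum.reindex[OF inj, of x] by simp
  then show ?thesis using eq by simp
qed

lemma rot_sum':
  assumes "0 < d"
  shows "(\<Sum>s<d. x ((i + s) mod d)) = (\<Sum>s<(d::nat). (x s::real))"
proof -
  have "(\<Sum>s<d. x ((i + s) mod d)) = (\<Sum>s<d. x ((s + i) mod d))"
    by (rule sum.cong[OF refl]) (simp only: add.commute)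
  then show ?thesis using rot_sum[OF assms] by simp
qed

lemma cshift_sum:
  assumes "0 < d"
  shows "(\<Sum>i<d. cshift d s x i) = (\<Sum>i<d. x i)"
  using rot_sum[OF assms, of x s] by (simp add: cshift_def)

lemma f_dc_cshift: "0 < d \<Longrightarrow> f_dc d (cshift d s x) = f_dc d x"
  by (simp add: f_dc_def cshift_sum)

lemma ip_cshift_sum:
  assumes "0 < d"
  shows "(\<Sum>s<d. ip d w (cshift d s x)) = (\<Sum>i<d. w i) * (\<Sum>i<d. x i)"
proof -
  have "(\<Sum>s<d. ip d w (cshift d s x)) = (\<Sum>s<d. \<Sum>i<d. w i * x ((i + s) mod d))"
    by (simp add: ip_def cshift_def)
  also have "\<dots> = (\<Sum>i<d. \<Sum>s<d. w i * x ((i + s) mod d))"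
    by (rule sum.swap)
  also have "\<dots> = (\<Sum>i<d. w i * (\<Sum>s<d. x ((i + s) mod d)))"
    by (simp only: sum_distrib_left)
  also have "\<dots> = (\<Sum>i<d. w i * (\<Sum>s<d. x s))"
    using rot_sum'[OF assms] by simp
  finally show ?thesis by (simp add: sum_distrib_right)
qed

lemma shifts_img: "shifts d X = (\<lambda>(x,s). cshift d s x) ` (X \<times> {..<d})"
  by (auto simp: shifts_def)

lemma finite_shifts: "finite X \<Longrightarrow> finite (shifts d X)"
  by (simp add: shifts_img)

lemma shifts_ne: "X \<noteq> {} \<Longrightarrow> 0 < d \<Longrightarrow> shifts d X \<noteq> {}"
  by (auto simp: shifts_def)

lemma fdc_shifts: "0 < d \<Longrightarrow> f_dc d ` shifts d X = f_dc d ` X"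
proof
  assume "0<d"
  show "f_dc d ` shifts d X \<subseteq> f_dc d ` X"
    using \<open>0<d\<close> by (auto simp: shifts_def f_dc_cshift)
  show "f_dc d ` X \<subseteq> f_dc d ` shifts d X"
  proof
    fix v assume "v \<in> f_dc d ` X"
    then obtain x where x: "x \<in> X" "v = f_dc d x" by auto
    then have "cshift d 0 x \<in> shifts d X" using \<open>0<d\<close> by (auto simp: shifts_def)
    moreover have "f_dc d (cshift d 0 x) = v" using x f_dc_cshift[OF \<open>0<d\<close>] by simp
    ultimately show "v \<in> f_dc d ` shifts d X" by (metis image_eqI)
  qed
qed

lemma ip_wbar: "ip d (wbar d) a = f_dc d a"
  by (simp add: ip_def wbar_def f_dc_def sum_divide_distrib)

lemma unit_wbar: "0 < d \<Longrightarrow> unit_vec d (wbar d)"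
  by (simp add: unit_vec_def vecs_def wbar_def ip_def)

lemma sum_le_sqrt:
  assumes "unit_vec d w" "0 < d"
  shows "(\<Sum>i<d. w i) \<le> sqrt (real d)"
proof -
  have q: "(\<Sum>i<d. w i * w i) = 1" using assms(1)
    by (simp add: unit_vec_def ip_def)
  define r where "r = sqrt (real d)"
  have r: "r > 0" using assms(2) by (simp add: r_def)
  have pt: "2 * w i \<le> (w i * w i) * r + 1 / r" for i
  proof -
    have "0 \<le> (w i * r - 1)^2" by simp
    then have "0 \<le> (w i * w i) * r * r - 2 * w i * r + 1" by (simp add: power2_eq_square algebra_simps)
    then show ?thesis using r by (simp add: field_simps)
  qed
  have "2 * (\<Sum>i<d. w i) = (\<Sum>i<d. 2 * w i)" by (simp add: sum_distrib_left)
  also have "\<dots> \<le> (\<Sum>i<d. (w i * w i) * r + 1 / r)"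
    by (rule sum_mono) (rule pt)
  also have "\<dots> = r + real d / r" using q by (simp add: sum.distrib sum_distrib_right[symmetric])
  also have "real d / r = r" using r by (simp add: r_def real_div_sqrt)
  finally show ?thesis by (simp add: r_def)
qed

lemma shift_mem: "x \<in> X \<Longrightarrow> s < d \<Longrightarrow> cshift d s x \<in> shifts d X"
  by (auto simp: shifts_def)

lemma MaxMin_iff:
  assumes "finite A" "finite B" "A \<noteq> {}" "B \<noteq> {}"
  shows "Max (f ` A) < Min (f ` B) \<longleftrightarrow> (\<forall>x\<in>A. \<forall>y\<in>B. (f x::real) < f y)"
  using assms by (auto simp: Max_less_iff Min_gr_iff)

lemma sep_lemma:
  assumes d: "0 < d"
    and h: "\<forall>a\<in>shifts d A. \<forall>b\<in>shifts d B. ip d w a < T \<and> T < ip d w b"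
  shows "(\<forall>x\<in>A. \<forall>y\<in>B. f_dc d x < f_dc d y) \<or> (\<forall>x\<in>A. \<forall>y\<in>B. f_dc d y < f_dc d x)"
proof -
  define W where "W = (\<Sum>i<d. w i)"
  have key: "W * (\<Sum>i<d. x i) < W * (\<Sum>i<d. y i)" if x: "x \<in> A" and y: "y \<in> B" for x y
  proof -
    have "(\<Sum>s<d. ip d w (cshift d s x)) < (\<Sum>s<d. T)"
    proof (rule sum_strict_mono)
      show "{..<d} \<noteq> {}" using d by auto
      fix s assume "s \<in> {..<d}"
      then have "cshift d s x \<in> shifts d A" "cshift d 0 y \<in> shifts d B" using x y d by (auto intro: shift_mem)
      then show "ip d w (cshift d s x) < T" using h by blast
    qed simp
    moreover have "(\<Sum>s<d. T) < (\<Sum>s<d. ip d w (cshift d s y))"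
    proof (rule sum_strict_mono)
      show "{..<d} \<noteq> {}" using d by auto
      fix s assume "s \<in> {..<d}"
      then have "cshift d 0 x \<in> shifts d A" "cshift d s y \<in> shifts d B" using x y d by (auto intro: shift_mem)
      then show "T < ip d w (cshift d s y)" using h by blast
    qed simp
    ultimately show ?thesis using ip_cshift_sum[OF d] W_def by (metis order.strict_trans)
  qed
  have sq: "sqrt (real d) > 0" using d by simp
  show ?thesis
  proof (cases "W > 0")
    case True
    have "f_dc d x < f_dc d y" if "x \<in> A" "y \<in> B" for x y
    proof -
      have "(\<Sum>i<d. x i) < (\<Sum>i<d. y i)" using key[OF that] True by simp
      then show ?thesis unfolding f_dc_def using sq by (rule divide_strict_right_mono)
    qed
    then show ?thesis by blast
  next
    case False
    have "f_dc d y < f_dc d x" if "x \<in> A" "y \<in> B" for x y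
    proof -
      have "W * (\<Sum>i<d. x i) < W * (\<Sum>i<d. y i)" using key[OF that] .
      moreover have "W \<noteq> 0" using calculation by auto
      ultimately have "W < 0" using False by linarith
      then have "(\<Sum>i<d. y i) < (\<Sum>i<d. x i)"
        using \<open>W * (\<Sum>i<d. x i) < W * (\<Sum>i<d. y i)\<close> mult_less_cancel_left_neg by blast
      then show ?thesis unfolding f_dc_def using sq by (rule divide_strict_right_mono)
    qed
    then show ?thesis by blast
  qed
qed

lemma margin_bound:
  assumes d: "0 < d" and fin: "finite A" "finite B" and ne: "A \<noteq> {}" "B \<noteq> {}"
    and w: "unit_vec d w" and le: "Max (f_dc d ` A) \<le> Min (f_dc d ` B)"
  shows "margin d (shifts d A) (shifts d B) w \<le> Min (f_dc d ` B) - Max (f_dc d ` A)"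
proof -
  have "Max (f_dc d ` A) \<in> f_dc d ` A" using fin ne by (intro Max_in) auto
  then obtain x where x: "x \<in> A" "f_dc d x = Max (f_dc d ` A)" by (metis imageE)
  have "Min (f_dc d ` B) \<in> f_dc d ` B" using fin ne by (intro Min_in) auto
  then obtain y where y: "y \<in> B" "f_dc d y = Min (f_dc d ` B)" by (metis imageE)
  define m where "m = Min (ip d w ` shifts d B)"
  define M where "M = Max (ip d w ` shifts d A)"
  define W where "W = (\<Sum>i<d. w i)"
  define r where "r = sqrt (real d)"
  have r: "r > 0" "r * r = real d" using d by (auto simp: r_def)
  have finS: "finite (shifts d A)" "finite (shifts d B)" using fin by (auto simp: finite_shifts)
  have "(\<Sum>s<d. m) \<le> (\<Sum>s<d. ip d w (cshift d s y))"
  proof (rule sum_mono)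
    fix s assume "s \<in> {..<d}"
    then have "cshift d s y \<in> shifts d B" using y by (auto simp: shifts_def)
    then show "m \<le> ip d w (cshift d s y)" unfolding m_def using finS by simp
  qed
  then have m1: "real d * m \<le> W * (\<Sum>i<d. y i)" using ip_cshift_sum[OF d] W_def by simp
  have "(\<Sum>s<d. ip d w (cshift d s x)) \<le> (\<Sum>s<d. M)"
  proof (rule sum_mono)
    fix s assume "s \<in> {..<d}"
    then have "cshift d s x \<in> shifts d A" using x by (auto simp: shifts_def)
    then show "ip d w (cshift d s x) \<le> M" unfolding M_def using finS by simp
  qed
  then have M1: "W * (\<Sum>i<d. x i) \<le> real d * M" using ip_cshift_sum[OF d] W_def by simp
  have sx: "(\<Sum>i<d. x i) = r * f_dc d x" and sy: "(\<Sum>i<d. y i) = r * f_dc d y"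
    using r by (auto simp: f_dc_def r_def)
  have dif: "f_dc d x \<le> f_dc d y" using x y le by simp
  have W: "W \<le> r" using sum_le_sqrt[OF w d] by (simp add: W_def r_def)
  have "real d * (m - M) \<le> W * r * (f_dc d y - f_dc d x)"
    using m1 M1 sx sy by (simp add: algebra_simps)
  also have "\<dots> \<le> r * r * (f_dc d y - f_dc d x)"
  proof (rule mult_right_mono)
    show "W * r \<le> r * r" using W r(1) by (intro mult_right_mono) auto
  qed (use dif in simp)
  finally have "real d * (m - M) \<le> real d * (f_dc d y - f_dc d x)" using r by simp
  then have "m - M \<le> f_dc d y - f_dc d x" using d by simp
  then show ?thesis using x y by (simp add: margin_def m_def M_def)
qed

lemma mid1: "(a::real) \<le> M \<Longrightarrow> M < m \<Longrightarrow> a < (M + m) / 2"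
  by (simp add: field_simps)

lemma mid2: "(b::real) \<ge> m \<Longrightarrow> M < m \<Longrightarrow> (M + m) / 2 < b"
  by (simp add: field_simps)

lemma ip_wbar_fun: "ip d (wbar d) = f_dc d"
  by (rule ext) (rule ip_wbar)

lemma mm_lemma:
  assumes d: "0 < d" and fin: "finite A" "finite B" and ne: "A \<noteq> {}" "B \<noteq> {}"
    and lt: "Max (f_dc d ` A) < Min (f_dc d ` B)"
  shows "max_margin d (shifts d A) (shifts d B) = Min (f_dc d ` B) - Max (f_dc d ` A)
          \<and> unit_vec d (wbar d)
          \<and> (\<exists>T. \<forall>a\<in>shifts d A. \<forall>b\<in>shifts d B.
                 ip d (wbar d) a < T \<and> T < ip d (wbar d) b)
          \<and> margin d (shifts d A) (shifts d B) (wbar d)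
              = max_margin d (shifts d A) (shifts d B)"
proof -
  have iA: "ip d (wbar d) ` shifts d A = f_dc d ` A"
    by (simp only: ip_wbar_fun fdc_shifts[OF d])
  have iB: "ip d (wbar d) ` shifts d B = f_dc d ` B"
    by (simp only: ip_wbar_fun fdc_shifts[OF d])
  have mw: "margin d (shifts d A) (shifts d B) (wbar d) = Min (f_dc d ` B) - Max (f_dc d ` A)"
    by (simp only: margin_def iA iB)
  have mem: "Min (f_dc d ` B) - Max (f_dc d ` A) \<in> margin d (shifts d A) (shifts d B) ` {w. unit_vec d w}"
  proof -
    have "wbar d \<in> {w. unit_vec d w}" using unit_wbar[OF d] by simp
    then have "margin d (shifts d A) (shifts d B) (wbar d) \<in> margin d (shifts d A) (shifts d B) ` {w. unit_vec d w}"
      by (rule imageI)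
    then show ?thesis by (simp only: mw)
  qed
  have ub: "z \<le> Min (f_dc d ` B) - Max (f_dc d ` A)"
    if "z \<in> margin d (shifts d A) (shifts d B) ` {w. unit_vec d w}" for z
  proof -
    from that obtain w where z: "z = margin d (shifts d A) (shifts d B) w" and w: "w \<in> {w. unit_vec d w}"
      by (rule imageE)
    have uw: "unit_vec d w" using w by (rule CollectD)
    have le: "Max (f_dc d ` A) \<le> Min (f_dc d ` B)" using lt by (rule less_imp_le)
    show ?thesis unfolding z by (rule margin_bound[OF d fin ne uw le])
  qed
  have mm: "max_margin d (shifts d A) (shifts d B) = Min (f_dc d ` B) - Max (f_dc d ` A)"
    unfolding max_margin_def using mem ub by (rule cSup_eq_maximum)
  have T: "\<exists>T. \<forall>a\<in>shifts d A. \<forall>b\<in>shifts d B. ip d (wbar d) a < T \<and> T < ip d (wbar d) b"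
  proof (intro exI ballI)
    fix a b assume a: "a \<in> shifts d A" and b: "b \<in> shifts d B"
    have fs: "finite (f_dc d ` A)" "finite (f_dc d ` B)" using fin by auto
    have "f_dc d a \<in> f_dc d ` shifts d A" using a by (rule imageI)
    then have "f_dc d a \<in> f_dc d ` A" by (simp only: fdc_shifts[OF d])
    then have 1: "f_dc d a \<le> Max (f_dc d ` A)" using fs(1) by (rule Max_ge[rotated])
    have "f_dc d b \<in> f_dc d ` shifts d B" using b by (rule imageI)
    then have "f_dc d b \<in> f_dc d ` B" by (simp only: fdc_shifts[OF d])
    then have 2: "Min (f_dc d ` B) \<le> f_dc d b" using fs(2) by (rule Min_le[rotated])
    show "ip d (wbar d) a < (Max (f_dc d ` A) + Min (f_dc d ` B)) / 2 \<and>
                     (Max (f_dc d ` A) + Min (f_dc d ` B)) / 2 < ip d (wbar d) b"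
      unfolding ip_wbar using 1 2 lt by (intro conjI mid1 mid2)
  qed
  have mw2: "margin d (shifts d A) (shifts d B) (wbar d) = max_margin d (shifts d A) (shifts d B)"
    by (simp only: mw mm)
  show ?thesis using mm unit_wbar[OF d] T mw2 by (intro conjI)
qed

theorem theorem1:
  fixes d :: nat and X1 X2 :: "(nat \<Rightarrow> real) set"
  assumes "d \<ge> 1"
    and "finite X1" "finite X2" "X1 \<noteq> {}" "X2 \<noteq> {}"
    and "X1 \<subseteq> vecs d" "X2 \<subseteq> vecs d"
  shows "(lin_sep d (shifts d X1) (shifts d X2) \<longleftrightarrow>
            Max (f_dc d ` shifts d X1) < Min (f_dc d ` shifts d X2) \<or>
            Max (f_dc d ` shifts d X2) < Min (f_dc d ` shifts d X1))
       \<and> (lin_sep d (shifts d X1) (shifts d X2) \<and>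
            Max (f_dc d ` shifts d X1) < Min (f_dc d ` shifts d X2) \<longrightarrow>
            max_margin d (shifts d X1) (shifts d X2)
              = Min (f_dc d ` shifts d X2) - Max (f_dc d ` shifts d X1)
          \<and> unit_vec d (wbar d)
          \<and> (\<exists>T. \<forall>a\<in>shifts d X1. \<forall>b\<in>shifts d X2.
                 ip d (wbar d) a < T \<and> T < ip d (wbar d) b)
          \<and> margin d (shifts d X1) (shifts d X2) (wbar d)
              = max_margin d (shifts d X1) (shifts d X2))
       \<and> (lin_sep d (shifts d X1) (shifts d X2) \<and>
            Max (f_dc d ` shifts d X2) < Min (f_dc d ` shifts d X1) \<longrightarrow>
            max_margin d (shifts d X2) (shifts d X1)
              = Min (f_dc d ` shifts d X1) - Max (f_dc d ` shifts d X2)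
          \<and> unit_vec d (wbar d)
          \<and> (\<exists>T. \<forall>a\<in>shifts d X2. \<forall>b\<in>shifts d X1.
                 ip d (wbar d) a < T \<and> T < ip d (wbar d) b)
          \<and> margin d (shifts d X2) (shifts d X1) (wbar d)
              = max_margin d (shifts d X2) (shifts d X1))"
proof -
  have d: "0 < d" using assms(1) by simp
  note fin = assms(2,3) and ne = assms(4,5)
  have e1: "f_dc d ` shifts d X1 = f_dc d ` X1" by (rule fdc_shifts[OF d])
  have e2: "f_dc d ` shifts d X2 = f_dc d ` X2" by (rule fdc_shifts[OF d])
  have M12: "Max (f_dc d ` X1) < Min (f_dc d ` X2) \<longleftrightarrow> (\<forall>x\<in>X1. \<forall>y\<in>X2. f_dc d x < f_dc d y)"
    by (rule MaxMin_iff[OF fin ne])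
  have M21: "Max (f_dc d ` X2) < Min (f_dc d ` X1) \<longleftrightarrow> (\<forall>x\<in>X2. \<forall>y\<in>X1. f_dc d x < f_dc d y)"
    by (rule MaxMin_iff[OF fin(2,1) ne(2,1)])
  have A: "max_margin d (shifts d X1) (shifts d X2) = Min (f_dc d ` X2) - Max (f_dc d ` X1)
          \<and> unit_vec d (wbar d)
          \<and> (\<exists>T. \<forall>a\<in>shifts d X1. \<forall>b\<in>shifts d X2.
                 ip d (wbar d) a < T \<and> T < ip d (wbar d) b)
          \<and> margin d (shifts d X1) (shifts d X2) (wbar d)
              = max_margin d (shifts d X1) (shifts d X2)"
    if "Max (f_dc d ` X1) < Min (f_dc d ` X2)"
    by (rule mm_lemma[OF d fin ne that])
  have B: "max_margin d (shifts d X2) (shifts d X1) = Min (f_dc d ` X1) - Max (f_dc d ` X2)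
          \<and> unit_vec d (wbar d)
          \<and> (\<exists>T. \<forall>a\<in>shifts d X2. \<forall>b\<in>shifts d X1.
                 ip d (wbar d) a < T \<and> T < ip d (wbar d) b)
          \<and> margin d (shifts d X2) (shifts d X1) (wbar d)
              = max_margin d (shifts d X2) (shifts d X1)"
    if "Max (f_dc d ` X2) < Min (f_dc d ` X1)"
    by (rule mm_lemma[OF d fin(2,1) ne(2,1) that])
  have L: "lin_sep d (shifts d X1) (shifts d X2) \<longleftrightarrow>
            Max (f_dc d ` X1) < Min (f_dc d ` X2) \<or> Max (f_dc d ` X2) < Min (f_dc d ` X1)"
  proof
    assume "lin_sep d (shifts d X1) (shifts d X2)"
    then obtain w T where
      c: "(\<forall>a\<in>shifts d X1. \<forall>b\<in>shifts d X2. ip d w a < T \<and> T < ip d w b) \<or>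
          (\<forall>a\<in>shifts d X1. \<forall>b\<in>shifts d X2. ip d w b < T \<and> T < ip d w a)"
      unfolding lin_sep_def by blast
    then show "Max (f_dc d ` X1) < Min (f_dc d ` X2) \<or> Max (f_dc d ` X2) < Min (f_dc d ` X1)"
    proof
      assume h: "\<forall>a\<in>shifts d X1. \<forall>b\<in>shifts d X2. ip d w a < T \<and> T < ip d w b"
      have "(\<forall>x\<in>X1. \<forall>y\<in>X2. f_dc d x < f_dc d y) \<or> (\<forall>x\<in>X1. \<forall>y\<in>X2. f_dc d y < f_dc d x)"
        by (rule sep_lemma[OF d h])
      then show ?thesis unfolding M12 M21 by blast
    next
      assume h0: "\<forall>a\<in>shifts d X1. \<forall>b\<in>shifts d X2. ip d w b < T \<and> T < ip d w a"
      have h: "\<forall>a\<in>shifts d X2. \<forall>b\<in>shifts d X1. ip d w a < T \<and> T < ip d w b"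
      proof (intro ballI)
        fix a b assume "a \<in> shifts d X2" "b \<in> shifts d X1"
        then show "ip d w a < T \<and> T < ip d w b" using h0 by simp
      qed
      have "(\<forall>x\<in>X2. \<forall>y\<in>X1. f_dc d x < f_dc d y) \<or> (\<forall>x\<in>X2. \<forall>y\<in>X1. f_dc d y < f_dc d x)"
        by (rule sep_lemma[OF d h])
      then show ?thesis unfolding M12 M21 by blast
    qed
  next
    assume "Max (f_dc d ` X1) < Min (f_dc d ` X2) \<or> Max (f_dc d ` X2) < Min (f_dc d ` X1)"
    then show "lin_sep d (shifts d X1) (shifts d X2)"
    proof
      assume "Max (f_dc d ` X1) < Min (f_dc d ` X2)"
      note h = this
      have u: "unit_vec d (wbar d)"
        using conjunct1[OF conjunct2[OF A[OF h]]] by this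
      have ex: "\<exists>T. \<forall>a\<in>shifts d X1. \<forall>b\<in>shifts d X2.
                 ip d (wbar d) a < T \<and> T < ip d (wbar d) b"
        using conjunct1[OF conjunct2[OF conjunct2[OF A[OF h]]]] by this
      from ex obtain T where T: "\<forall>a\<in>shifts d X1. \<forall>b\<in>shifts d X2.
                 ip d (wbar d) a < T \<and> T < ip d (wbar d) b" by (elim exE)
      show ?thesis unfolding lin_sep_def
        by (intro exI[of _ "wbar d"] exI[of _ T] conjI u disjI1 T)
    next
      assume "Max (f_dc d ` X2) < Min (f_dc d ` X1)"
      note h = this
      have u: "unit_vec d (wbar d)"
        using conjunct1[OF conjunct2[OF B[OF h]]] by this
      have ex: "\<exists>T. \<forall>a\<in>shifts d X2. \<forall>b\<in>shifts d X1.
                 ip d (wbar d) a < T \<and> T < ip d (wbar d) b"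
        using conjunct1[OF conjunct2[OF conjunct2[OF B[OF h]]]] by this
      from ex obtain T where T: "\<forall>a\<in>shifts d X2. \<forall>b\<in>shifts d X1.
                 ip d (wbar d) a < T \<and> T < ip d (wbar d) b" by (elim exE)
      have "\<forall>a\<in>shifts d X1. \<forall>b\<in>shifts d X2. ip d (wbar d) b < T \<and> T < ip d (wbar d) a"
      proof (intro ballI)
        fix a b assume "a \<in> shifts d X1" "b \<in> shifts d X2"
        then show "ip d (wbar d) b < T \<and> T < ip d (wbar d) a" using T by simp
      qed
      then show ?thesis unfolding lin_sep_def
        by (intro exI[of _ "wbar d"] exI[of _ T] conjI u disjI2)
    qed
  qed
  show ?thesis unfolding e1 e2
  proof (intro conjI impI)
    show "lin_sep d (shifts d X1) (shifts d X2) \<longleftrightarrow>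
            Max (f_dc d ` X1) < Min (f_dc d ` X2) \<or> Max (f_dc d ` X2) < Min (f_dc d ` X1)"
      by (rule L)
  next
    assume "lin_sep d (shifts d X1) (shifts d X2) \<and> Max (f_dc d ` X1) < Min (f_dc d ` X2)"
    then have "Max (f_dc d ` X1) < Min (f_dc d ` X2)" by (rule conjunct2)
    note h = A[OF this]
    show "max_margin d (shifts d X1) (shifts d X2) = Min (f_dc d ` X2) - Max (f_dc d ` X1)" using conjunct1[OF h] by this
    show "unit_vec d (wbar d)" using conjunct1[OF conjunct2[OF h]] by this
    show "\<exists>T. \<forall>a\<in>shifts d X1. \<forall>b\<in>shifts d X2. ip d (wbar d) a < T \<and> T < ip d (wbar d) b" using conjunct1[OF conjunct2[OF conjunct2[OF h]]] by this
    show "margin d (shifts d X1) (shifts d X2) (wbar d) = max_margin d (shifts d X1) (shifts d X2)" using conjunct2[OF conjunct2[OF conjunct2[OF h]]] by this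
  next
    assume "lin_sep d (shifts d X1) (shifts d X2) \<and> Max (f_dc d ` X2) < Min (f_dc d ` X1)"
    then have "Max (f_dc d ` X2) < Min (f_dc d ` X1)" by (rule conjunct2)
    note h = B[OF this]
    show "max_margin d (shifts d X2) (shifts d X1) = Min (f_dc d ` X1) - Max (f_dc d ` X2)" using conjunct1[OF h] by this
    show "unit_vec d (wbar d)" using conjunct1[OF conjunct2[OF h]] by this
    show "\<exists>T. \<forall>a\<in>shifts d X2. \<forall>b\<in>shifts d X1. ip d (wbar d) a < T \<and> T < ip d (wbar d) b" using conjunct1[OF conjunct2[OF conjunct2[OF h]]] by this
    show "margin d (shifts d X2) (shifts d X1) (wbar d) = max_margin d (shifts d X2) (shifts d X1)" using conjunct2[OF conjunct2[OF conjunct2[OF h]]] by this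
  qed
qed

end
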